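(* Let $n\ge 1$, $N=2^n$ and $s=(N-1)/2$. Let $0\le j<N/2$ be an integer and let $z\in\tilde\Xi^{(N)}_j$, i.e. $z=W^{(N)}_j\oplus e$ for some $e\in\{0,1\}^N$ with Hamming weight $|e|<N/4$ and $e\preccurlyeq W^{(N)}_{N-1}$. Then $$\hat H^{\otimes n}\,\hat U_z\,\hat H^{\otimes n}\left(\left|\tfrac12\right\rangle_s+\left|-\tfrac12\right\rangle_s\right)=\left|\tfrac12+j\right\rangle_s+\left|-\tfrac12-j\right\rangle_s .$$
   Context: Work in $\mathbb{C}^N$ with computational basis $\{|y\rangle : y=0,\dots,N-1\}$. The spin basis states $|m\rangle_s$, $m\in\{-s,\dots,s\}$, are identified with computational basis states via $|m\rangle_s=|m+s\rangle$. For $x,y\in\{0,\dots,N-1\}$ let $x\cdot y\in\{0,1\}$ be the inner product modulo 2 of their $n$-bit binary expansions. $\hat H^{\otimes n}|y\rangle=N^{-1/2}\sum_{x=0}^{N-1}(-1)^{x\cdot y}|x\rangle$. The Hadamard codeword $W^{(N)}_j\in\{0,1\}^N$ has bit $x\cdot j$ at position $x\in\{0,\dots,N-1\}$; in particular $W^{(N)}_{N-1}$ has a 1 exactly at the positions $x$ whose binary expansion has an odd number of ones. For $a,b\in\{0,1\}^N$, $a\preccurlyeq b$ means: whenever $a_x=1$ then $b_x=1$. $\oplus$ is bitwise addition mod 2. For $z\in\{0,1\}^N$, $\hat U_z$ is the diagonal unitary $\hat U_z|x\rangle=(-1)^{z_x}|x\rangle$. The set $\tilde\Xi^{(N)}_j$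 (codewords with restricted errors) is the set of strings $W^{(N)}_j\oplus e$ with $e\preccurlyeq W^{(N)}_{N-1}$ and $|e|\in\{0,1,\dots,N/4-1\}$. *)

theory Defs
  imports Complex_Main
begin

text \<open>Vectors in C^N (N = 2^n) are functions nat => complex; entries at indices >= N are 0.
  Binary strings in {0,1}^N are functions nat => bool, only positions x < N matter.\<close>

definition bdot :: "nat \<Rightarrow> nat \<Rightarrow> nat \<Rightarrow> nat" where
  "bdot n x y = (\<Sum>i<n. if bit x i \<and> bit y i then 1 else 0) mod 2"

definition hadamard_n :: "nat \<Rightarrow> (nat \<Rightarrow> complex) \<Rightarrow> (nat \<Rightarrow> complex)" where
  "hadamard_n n v = (\<lambda>x. if x < 2^n then
      complex_of_real (1 / sqrt (2^n)) * (\<Sum>y<2^n. (-1) ^ (bdot n x y) * v y) else 0)"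

definition U_diag :: "nat \<Rightarrow> (nat \<Rightarrow> bool) \<Rightarrow> (nat \<Rightarrow> complex) \<Rightarrow> (nat \<Rightarrow> complex)" where
  "U_diag n z v = (\<lambda>x. if x < 2^n then (if z x then -1 else 1) * v x else 0)"

definition spin_ket :: "nat \<Rightarrow> real \<Rightarrow> (nat \<Rightarrow> complex)" where
  "spin_ket n m = (\<lambda>x. if x < 2^n \<and> real x = m + (2^n - 1) / 2 then 1 else 0)"

definition hadamard_codeword :: "nat \<Rightarrow> nat \<Rightarrow> (nat \<Rightarrow> bool)" where
  "hadamard_codeword n j = (\<lambda>x. bdot n x j = 1)"

definition preceq :: "nat \<Rightarrow> (nat \<Rightarrow> bool) \<Rightarrow> (nat \<Rightarrow> bool) \<Rightarrow> bool" where
  "preceq n a b \<longleftrightarrow> (\<forall>x<2^n. a x \<longrightarrow> b x)"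

definition hweight :: "nat \<Rightarrow> (nat \<Rightarrow> bool) \<Rightarrow> nat" where
  "hweight n e = card {x. x < 2^n \<and> e x}"

definition xor_str :: "nat \<Rightarrow> (nat \<Rightarrow> bool) \<Rightarrow> (nat \<Rightarrow> bool) \<Rightarrow> (nat \<Rightarrow> bool)" where
  "xor_str n a b = (\<lambda>x. x < 2^n \<and> a x \<noteq> b x)"

definition Xi_tilde :: "nat \<Rightarrow> nat \<Rightarrow> (nat \<Rightarrow> bool) set" where
  "Xi_tilde n j = {xor_str n (hadamard_codeword n j) e | e.
      preceq n e (hadamard_codeword n (2^n - 1)) \<and> real (hweight n e) < real (2^n) / 4}"

end

theory Submission
  imports Defs
begin

lemma high_bit: "(x::nat) < 2^n \<Longrightarrow> n \<le> i \<Longrightarrow> \<not> bit x i"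
proof -
  assume a: "x < 2^n" "n \<le> i"
  have "(2::nat)^n \<le> 2^i" using a(2) by simp
  then have "x div 2^i = 0" using a(1) by (intro div_less) (rule less_le_trans)
  then show ?thesis by (simp add: bit_nat_def)
qed

lemma bits_eq_low: "(x::nat) < 2^n \<Longrightarrow> y < 2^n \<Longrightarrow> (x = y) = (\<forall>i<n. bit x i = bit y i)"
  apply (rule iffI, simp)
  apply (rule bit_eqI)
  by (metis high_bit not_less)

lemma disj_xor: "(\<And>i. \<not> (bit (a::nat) i \<and> bit b i)) \<Longrightarrow> xor a b = a + b"
proof -
  assume d: "\<And>i. \<not> (bit (a::nat) i \<and> bit b i)"
  have "a + b = or a b" by (rule disjunctive_add) (use d in blast)
  also have "or a b = xor a b" by (rule bit_eqI) (use d in \<open>auto simp: bit_or_iff bit_xor_iff\<close>)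
  finally show ?thesis by simp
qed

definition cnt :: "nat \<Rightarrow> nat \<Rightarrow> nat \<Rightarrow> nat" where
  "cnt n x y = (\<Sum>i<n. if bit x i \<and> bit y i then 1 else 0)"

definition chi :: "nat \<Rightarrow> nat \<Rightarrow> nat \<Rightarrow> complex" where
  "chi n x y = (-1) ^ cnt n x y"

lemma pow_bdot: "(-1::complex) ^ bdot n x y = chi n x y"
  unfolding bdot_def chi_def cnt_def[symmetric]
  by (simp add: minus_one_power_iff)

lemma bdot_cases: "bdot n x y = 0 \<or> bdot n x y = 1"
  unfolding bdot_def by auto

lemma chi_comm: "chi n x y = chi n y x"
  unfolding chi_def cnt_def by (simp add: conj_commute)

lemma chi_xor: "chi n x (xor a b) = chi n x a * chi n x b"
proof -
  have "cnt n x a + cnt n x b = cnt n x (xor a b) + 2 * (\<Sum>i<n. if bit x i \<and> bit a i \<and> bit b i then 1 else 0)"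
    unfolding cnt_def sum.distrib[symmetric] sum_distrib_left
    by (rule sum.cong) (auto simp: bit_xor_iff)
  then have "(-1::complex) ^ (cnt n x a + cnt n x b) = (-1) ^ cnt n x (xor a b)"
    by (simp add: power_add power_mult)
  then show ?thesis unfolding chi_def by (simp add: power_add)
qed

lemma sum_split2: "(\<Sum>x<2*k. f x) = (\<Sum>x<k. f x) + (\<Sum>x<k. f (x + k::nat))"
proof -
  have "{..<2*k} = {..<k} \<union> {k..<k+k}" by auto
  then have "(\<Sum>x<2*k. f x) = (\<Sum>x<k. f x) + (\<Sum>x\<in>{k..<k+k}. f x)"
    by (simp add: sum.union_disjoint ivl_disj_int)
  also have "(\<Sum>x\<in>{k..<k+k}. f x) = (\<Sum>x<k. f (x + k))"
    using sum.shift_bounds_nat_ivl[of f 0 k k] by (simp add: atLeast0LessThan add.commute)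
  finally show ?thesis .
qed

lemma chi_sum: "(\<Sum>x<2^n. chi n x a) = (if \<forall>i<n. \<not> bit a i then 2^n else 0)"
proof (induction n)
  case 0
  then show ?case by (simp add: chi_def cnt_def)
next
  case (Suc n)
  have c1: "chi (Suc n) x a = chi n x a" if "x < 2^n" for x :: nat
    using high_bit[OF that, of n] by (simp add: chi_def cnt_def)
  have b: "bit (x + 2^n) i = (bit x i \<or> i = n)" if "x < 2^n" for x i :: nat
    apply (subst bit_disjunctive_add_iff)
    using high_bit[OF that] by (auto simp: bit_exp_iff)
  have c2: "chi (Suc n) (x + 2^n) a = chi n x a * (if bit a n then -1 else 1)" if "x < 2^n" for x :: nat
  proof -
    have "cnt n (x + 2^n) a = cnt n x a" unfolding cnt_def
      by (rule sum.cong) (auto simp: b[OF that])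
    then show ?thesis unfolding chi_def using b[OF that] by (simp add: cnt_def)
  qed
  have "(\<Sum>x<2^Suc n. chi (Suc n) x a) = (\<Sum>x<2^n. chi (Suc n) x a) + (\<Sum>x<2^n. chi (Suc n) (x + 2^n) a)"
    using sum_split2[of "\<lambda>x. chi (Suc n) x a" "2^n"] by simp
  also have "\<dots> = (\<Sum>x<2^n. chi n x a) + (\<Sum>x<2^n. chi n x a * (if bit a n then -1 else 1))"
    using c1 c2 by simp
  also have "\<dots> = (\<Sum>x<2^n. chi n x a) * (1 + (if bit a n then -1 else 1))"
    by (simp only: sum_distrib_right[symmetric] distrib_left mult_1_right)
  also have "\<dots> = (if \<forall>i<Suc n. \<not> bit a i then 2^Suc n else 0)"
    unfolding Suc.IH by (auto simp: less_Suc_eq)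
  finally show ?case .
qed


lemma xor_cancel: "xor (a::nat) (xor a b) = b"
  by (rule bit_eqI) (auto simp: bit_xor_iff)

lemma xor_mask: "(w::nat) < 2^n \<Longrightarrow> xor w (2^n - 1) = 2^n - 1 - w"
proof -
  assume w: "w < 2^n"
  have bm: "bit ((2::nat)^n - 1) i = (i < n)" for i
    using bit_mask_iff[of n i, where 'a=nat] by (simp add: mask_nat_def)
  have "xor w (xor w (2^n - 1)) = w + xor w (2^n - 1)"
    apply (rule disj_xor)
    using high_bit[OF w] by (auto simp: bit_xor_iff bm bm[simplified] not_le[symmetric])
  then show ?thesis by (simp add: xor_cancel)
qed

lemma spin_eq: "k < 2^n \<Longrightarrow> real k = r + (2^n - 1) / 2 \<Longrightarrow> spin_ket n r = (\<lambda>y. if y = k then 1 else 0)"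
  unfolding spin_ket_def by (rule ext) auto

lemma sum_delta2: "p < (N::nat) \<Longrightarrow> q < N \<Longrightarrow> (\<Sum>y<N. f y * ((if y = p then 1 else 0) + (if y = q then 1 else 0))) = f p + (f q::complex)"
proof -
  have "\<And>y. f y * ((if y = p then 1 else 0) + (if y = q then 1 else 0)) = (if y = p then f p else 0) + (if y = q then f q else 0)" by auto
  then show "p < N \<Longrightarrow> q < N \<Longrightarrow> ?thesis" by (simp add: sum.distrib sum.delta)
qed


lemma xor_zero: "(y::nat) < 2^n \<Longrightarrow> w < 2^n \<Longrightarrow> (\<forall>i<n. \<not> bit (xor y w) i) = (y = w)"
  by (simp add: bits_eq_low bit_xor_iff)

theorem lemma2:
  fixes n j :: nat and z :: "nat \<Rightarrow> bool"
  assumes "n \<ge> 1" and "j < 2^n div 2" and "z \<in> Xi_tilde n j"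
  shows "hadamard_n n (U_diag n z (hadamard_n n (\<lambda>x. spin_ket n (1/2) x + spin_ket n (-1/2) x)))
       = (\<lambda>x. spin_ket n (1/2 + real j) x + spin_ket n (-1/2 - real j) x)"
proof -
  define N :: nat where "N = 2^n"
  define p :: nat where "p = 2^(n-1)"
  define q :: nat where "q = p - 1"
  define m :: nat where "m = 2^n - 1"
  define c :: complex where "c = complex_of_real (1 / sqrt (2^n))"
  have hN: "(2::nat)^n = 2 * p" unfolding p_def using assms(1)
    by (metis Suc_diff_le diff_Suc_1 power_Suc)
  have hNr: "(2::real)^n = 2 * real p" using hN by (metis of_nat_numeral of_nat_mult of_nat_power)
  have pos: "p \<ge> 1" unfolding p_def by simp
  have jp: "j < p" using assms(2) hN by simp
  obtain e where z: "z = xor_str n (hadamard_codeword n j) e"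
    and e: "preceq n e (hadamard_codeword n (2^n - 1))"
    using assms(3) unfolding Xi_tilde_def by blast
  have cc: "c * c = 1 / 2^n" unfolding c_def
    by (simp flip: of_real_mult)
  have bq: "bit q i = (i < n - 1)" for i
    using bit_mask_iff[of "n-1" i, where 'a=nat] by (simp add: mask_nat_def q_def p_def)
  have pq: "xor p q = m"
  proof -
    have "xor p q = p + q"
      by (rule disj_xor) (auto simp: p_def bq bit_exp_iff)
    then show ?thesis using hN pos unfolding m_def q_def by simp
  qed
  have qpm: "q = xor p m" using pq xor_cancel by metis
  have pj: "xor p j = p + j"
    by (rule disj_xor) (use high_bit[of j "n-1"] jp in \<open>auto simp: p_def bit_exp_iff\<close>)
  have pjN: "p + j < 2^n" using jp hN by simp
  have qj: "xor (p + j) m = q - j"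
    using xor_mask[OF pjN] hN unfolding m_def q_def by simp
  have sp1: "spin_ket n (1/2) = (\<lambda>y. if y = p then 1 else 0)"
    by (rule spin_eq) (use hN hNr pos in \<open>auto simp: field_simps\<close>)
  have sp2: "spin_ket n (-1/2) = (\<lambda>y. if y = q then 1 else 0)"
    by (rule spin_eq) (use hN hNr pos in \<open>auto simp: q_def of_nat_diff field_simps\<close>)
  have sp3: "spin_ket n (1/2 + real j) = (\<lambda>y. if y = p + j then 1 else 0)"
    by (rule spin_eq) (use hN hNr pjN in \<open>auto simp: field_simps\<close>)
  have sp4: "spin_ket n (-1/2 - real j) = (\<lambda>y. if y = q - j then 1 else 0)"
    by (rule spin_eq) (use hN hNr pos jp in \<open>auto simp: q_def of_nat_diff field_simps\<close>)
  define H1 where "H1 = hadamard_n n (\<lambda>x. spin_ket n (1/2) x + spin_ket n (-1/2) x)"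
  have H1: "H1 x = c * (chi n x p * (1 + chi n x m))" if "x < 2^n" for x
  proof -
    have "H1 x = c * (chi n x p + chi n x q)"
      unfolding H1_def hadamard_n_def sp1 sp2 c_def using that
      by (simp add: sum_delta2 pos pow_bdot hN q_def)
    then show ?thesis by (simp add: qpm chi_xor algebra_simps)
  qed
  define U1 where "U1 = U_diag n z H1"
  have U1: "U1 x = c * (chi n x p * chi n x j * (1 + chi n x m))" if "x < 2^n" for x
  proof (cases "bdot n x m = 1")
    case True
    then have "chi n x m = -1" using pow_bdot[of n x m] by simp
    then show ?thesis unfolding U1_def U_diag_def using that H1[OF that] by simp
  next
    case False
    then have "\<not> e x" using e that unfolding preceq_def hadamard_codeword_def m_def by blast
    then have zx: "z x = (bdot n x j = 1)" using that unfolding z xor_str_def hadamard_codeword_def by simp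
    have "(if z x then -1 else 1) = chi n x j"
      unfolding zx pow_bdot[symmetric] using bdot_cases[of n x j] by auto
    then show ?thesis unfolding U1_def U_diag_def using that H1[OF that] by (simp add: algebra_simps)
  qed
  have "hadamard_n n U1 = (\<lambda>x. spin_ket n (1/2 + real j) x + spin_ket n (-1/2 - real j) x)"
  proof (rule ext)
    fix y
    show "hadamard_n n U1 y = spin_ket n (1/2 + real j) y + spin_ket n (-1/2 - real j) y"
    proof (cases "y < 2^n")
      case False
      then show ?thesis unfolding hadamard_n_def sp3 sp4 using pjN hN by (auto simp: q_def)
    next
      case True
      define a where "a = xor y (p + j)"
      have "hadamard_n n U1 y = c * (\<Sum>x<2^n. chi n y x * U1 x)"
        unfolding hadamard_n_def c_def using True by (simp add: pow_bdot)
      also have "\<dots> = c * c * (\<Sum>x<2^n. chi n x a + chi n x (xor a m))"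
      proof -
        have "c * (chi n y x * U1 x) = c * c * (chi n x a + chi n x (xor a m))" if "x < 2^n" for x
        proof -
          have "chi n x a = chi n x y * chi n x p * chi n x j"
            unfolding a_def pj[symmetric] chi_xor by simp
          moreover have "chi n x (xor a m) = chi n x a * chi n x m" by (rule chi_xor)
          moreover have "chi n y x = chi n x y" by (rule chi_comm)
          ultimately show ?thesis using U1[OF that] by (simp add: algebra_simps)
        qed
        then show ?thesis unfolding sum_distrib_left by (intro sum.cong) auto
      qed
      also have "\<dots> = (if y = p + j then 1 else 0) + (if y = q - j then 1 else 0)"
      proof -
        have qjN: "q - j < 2^n" using hN pos unfolding q_def by simp
        have e1: "xor a m = xor y (q - j)" unfolding a_def qj[symmetric] by (simp add: xor.assoc)
        have ne: "p + j \<noteq> q - j" using pos unfolding q_def by simp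
        have "(\<Sum>x<2^n. chi n x a + chi n x (xor a m)) = (\<Sum>x<2^n. chi n x a) + (\<Sum>x<2^n. chi n x (xor y (q - j)))"
          unfolding sum.distrib e1 ..
        also have "\<dots> = (if y = p + j then 2^n else 0) + (if y = q - j then 2^n else 0)"
          unfolding chi_sum a_def xor_zero[OF True pjN] xor_zero[OF True qjN] ..
        finally show ?thesis using ne unfolding cc by auto
      qed
      finally show ?thesis unfolding sp3 sp4 by simp
    qed
  qed
  then show ?thesis unfolding U1_def H1_def .
qed

end
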